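(* Let $S \subseteq \mathbb{R}^n$ be nonempty, closed and convex, and let $F_i = f_i + g_i$, $i = 1,\dots,m$, where each $f_i \colon S \to \mathbb{R}$ is continuously differentiable (not necessarily convex) and each $g_i \colon S \to \mathbb{R}$ is convex (not necessarily differentiable). For $\ell > 0$ define \[ w_\ell(x) := \max_{y \in S} \min_{i = 1,\dots,m} \left\{ \nabla f_i(x)^\top (x - y) + g_i(x) - g_i(y) - \frac{\ell}{2}\|x - y\|^2 \right\}, \quad x\in S. \] Then $w_\ell(x) \ge 0$ for all $x \in S$. Moreover, $x \in S$ is Pareto stationary for $\min_{x \in S} F(x)$, $F = (F_1,\dots,F_m)^\top$, if and only if $w_\ell(x) = 0$.
   Context: A point $\bar x \in S$ is Pareto stationary for $\min_{x\in S}F(x)$ if $\max_{i=1,\dots,m} F_i'(\bar x; z - \bar x) \ge 0$ for all $z \in S$, where $F_i'(x;d) := \lim_{t\searrow0}(F_i(x+td)-F_i(x))/t$ is the directional derivative. *)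

theory Defs
  imports "HOL-Analysis.Analysis"
begin

text \<open>One-sided directional derivative F'(x;d) = lim_{t -> 0+} (F(x+td)-F(x))/t,
  taken in the extended reals (for a convex part the limit exists in [-inf, +inf)).\<close>
definition dir_deriv :: "('a::real_normed_vector \<Rightarrow> real) \<Rightarrow> 'a \<Rightarrow> 'a \<Rightarrow> ereal" where
  "dir_deriv F x d = Lim (at_right (0::real)) (\<lambda>t. ereal ((F (x + t *\<^sub>R d) - F x) / t))"

definition pareto_stationary ::
  "'a::real_normed_vector set \<Rightarrow> nat \<Rightarrow> (nat \<Rightarrow> 'a \<Rightarrow> real) \<Rightarrow> 'a \<Rightarrow> bool" where
  "pareto_stationary S m F x \<longleftrightarrow> x \<in> S \<and>
     (\<forall>z\<in>S. Max ((\<lambda>i. dir_deriv (F i) x (z - x)) ` {1..m}) \<ge> 0)"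

text \<open>The merit function w_ell; Df i x is the gradient of f_i at x.\<close>
definition w_merit ::
  "'a::real_inner set \<Rightarrow> nat \<Rightarrow> (nat \<Rightarrow> 'a \<Rightarrow> 'a) \<Rightarrow> (nat \<Rightarrow> 'a \<Rightarrow> real) \<Rightarrow> real \<Rightarrow> 'a \<Rightarrow> real" where
  "w_merit S m Df g l x = (SUP y\<in>S. Min ((\<lambda>i. Df i x \<bullet> (x - y) + g i x - g i y
                                        - l / 2 * (norm (x - y))\<^sup>2) ` {1..m}))"

end

theory Submission
  imports Defs
begin

lemma convex_lower_bound:
  fixes S :: "'a::euclidean_space set"
  assumes g: "convex_on S g" and ne: "S \<noteq> {}"
  shows "\<exists>c A B. B \<ge> 0 \<and> (\<forall>y\<in>S. g y \<ge> A - B * norm (y - c))"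
proof -
  have cS: "convex S" using g convex_on_imp_convex by blast
  obtain T where T: "T \<subseteq> S" "\<not> affine_dependent T" "affine hull S = affine hull T"
    using affine_basis_exists by blast
  have fT: "finite T" using T(2) aff_independent_finite by blast
  have Tne: "T \<noteq> {}" using T(3) ne by (metis affine_hull_eq_empty)
  define P where "P = convex hull T"
  have PS: "P \<subseteq> S" unfolding P_def using T(1) cS by (simp add: hull_minimal)
  define M where "M = max 0 (Max (g ` T))"
  have M0: "M \<ge> 0" unfolding M_def by simp
  have gP: "\<forall>x\<in>P. g x \<le> M"
    unfolding P_def
  proof (rule convex_on_convex_hull_bound)
    show "convex_on (convex hull T) g" using convex_on_subset[OF g] PS P_def by (simp add: convex_convex_hull)
    show "\<forall>x\<in>T. g x \<le> M" unfolding M_def using fT by (simp add: max.coboundedI2)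
  qed
  have "rel_interior P \<noteq> {}" using Tne P_def by (simp add: rel_interior_eq_empty convex_convex_hull)
  then obtain c where "c \<in> rel_interior P" by blast
  then obtain e where c: "c \<in> P" "e > 0" "cball c e \<inter> affine hull P \<subseteq> P"
    using mem_rel_interior_cball by blast
  have affP: "affine hull P = affine hull S" using T(3) P_def by simp
  have cS': "c \<in> S" using c PS by blast
  have gcM: "g c \<le> M" using gP c by blast
  define B where "B = (M - g c) / e"
  have B0: "B \<ge> 0" unfolding B_def using gcM c by simp
  have "g y \<ge> (g c - M) - B * norm (y - c)" if y: "y \<in> S" for y
  proof (cases "y = c")
    case True then show ?thesis using M0 B0 by simp
  next
    case False
    define r where "r = norm (c - y)"
    have r0: "r > 0" using False r_def by simp
    define w where "w = c + (e / r) *\<^sub>R (c - y)"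
    have "w \<in> affine hull S"
    proof -
      have "w = (1 + e/r) *\<^sub>R c + (- (e/r)) *\<^sub>R y" unfolding w_def by (simp add: algebra_simps)
      moreover have "(1 + e/r) *\<^sub>R c + (- (e/r)) *\<^sub>R y \<in> affine hull S"
        by (rule mem_affine[OF affine_affine_hull]) (use cS' y hull_subset[of S affine] in auto)
      ultimately show ?thesis by simp
    qed
    moreover have "w \<in> cball c e" unfolding w_def r_def using c(2) r0 r_def
      by (simp add: dist_norm)
    ultimately have wP: "w \<in> P" using c(3) affP by blast
    have gw: "g w \<le> M" using gP wP by blast
    define lam where "lam = e / (e + r)"
    have lam: "0 \<le> lam" "lam \<le> 1" unfolding lam_def using c(2) r0 by auto
    have l1: "1 - lam = r / (e + r)" unfolding lam_def using c(2) r0 by (simp add: field_simps)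
    have l2: "(1 - lam) * (e / r) = lam" unfolding l1 lam_def using r0 c(2) by (simp add: field_simps)
    have "(1 - lam) *\<^sub>R w + lam *\<^sub>R y = c"
    proof -
      have "(1 - lam) *\<^sub>R w + lam *\<^sub>R y = (1 - lam) *\<^sub>R c + ((1 - lam) * (e / r)) *\<^sub>R (c - y) + lam *\<^sub>R y"
        unfolding w_def by (simp add: algebra_simps)
      also have "\<dots> = c" unfolding l2 by (simp add: algebra_simps)
      finally show ?thesis .
    qed
    then have "g c \<le> (1 - lam) * g w + lam * g y"
      using convex_onD[OF g, of lam w y] lam wP PS y by auto
    also have "\<dots> \<le> (1 - lam) * M + lam * g y" using gw lam by (simp add: mult_left_mono)
    finally have *: "g c - M \<le> lam * g y - lam * M" by (simp add: algebra_simps)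
    have lp: "lam > 0" unfolding lam_def using c(2) r0 by simp
    have "(g c - M) / lam \<le> g y - M"
      by (subst pos_divide_le_eq[OF lp]) (use * in \<open>simp add: algebra_simps\<close>)
    moreover have "(g c - M) / lam = (g c - M) - B * r"
      unfolding lam_def B_def using c(2) r0 by (simp add: field_simps)
    ultimately show ?thesis using M0 r_def by (simp add: norm_minus_commute)
  qed
  then show ?thesis using B0 by blast
qed

lemma dir_deriv_lemma:
  fixes S :: "'a::real_inner set"
  assumes g: "convex_on S g" and x: "x \<in> S" and z: "z \<in> S"
    and f: "(f has_derivative (\<lambda>h. D \<bullet> h)) (at x)"
  shows "((\<lambda>t. ereal (D \<bullet> (z - x) + (g (x + t *\<^sub>R (z - x)) - g x) / t))
            \<longlongrightarrow> dir_deriv (\<lambda>y. f y + g y) x (z - x)) (at_right 0)"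
    and "dir_deriv (\<lambda>y. f y + g y) x (z - x) \<le> ereal (D \<bullet> (z - x) + g z - g x)"
proof -
  define v where "v = z - x"
  define Q where "Q t = (g (x + t *\<^sub>R v) - g x) / t" for t
  have cS: "convex S" using g convex_on_imp_convex by blast
  have inS: "x + t *\<^sub>R v \<in> S" if "0 \<le> t" "t \<le> 1" for t
  proof -
    have "x + t *\<^sub>R v = (1 - t) *\<^sub>R x + t *\<^sub>R z" unfolding v_def by (simp add: algebra_simps)
    then show ?thesis using convexD[OF cS x z, of "1 - t" t] that by simp
  qed
  have mono: "Q s \<le> Q t" if "0 < s" "s \<le> t" "t \<le> 1" for s t
  proof -
    have t0: "t > 0" using that by simp
    have e: "x + s *\<^sub>R v = (1 - s/t) *\<^sub>R x + (s/t) *\<^sub>R (x + t *\<^sub>R v)"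
      using t0 by (simp add: algebra_simps)
    have "g (x + s *\<^sub>R v) \<le> (1 - s/t) * g x + (s/t) * g (x + t *\<^sub>R v)"
      unfolding e by (rule convex_onD[OF g]) (use that t0 x inS in auto)
    then have "g (x + s *\<^sub>R v) - g x \<le> (s/t) * (g (x + t *\<^sub>R v) - g x)"
      by (simp add: algebra_simps)
    then have "(g (x + s *\<^sub>R v) - g x) / s \<le> (g (x + t *\<^sub>R v) - g x) / t"
      using that t0 by (simp add: field_simps)
    then show ?thesis unfolding Q_def .
  qed
  define I where "I = (INF t\<in>{0<..1}. ereal (Q t))"
  have limQ: "((\<lambda>t. ereal (Q t)) \<longlongrightarrow> I) (at_right 0)"
  proof (rule order_tendstoI)
    fix a assume "a < I"
    have "eventually (\<lambda>t. t \<in> {0<..1}) (at_right (0::real))"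
      unfolding eventually_at_right[OF zero_less_one] by (auto intro!: exI[of _ 1])
    then show "eventually (\<lambda>t. a < ereal (Q t)) (at_right 0)"
    proof (rule eventually_mono)
      fix t :: real assume "t \<in> {0<..1}"
      then have "I \<le> ereal (Q t)" unfolding I_def by (rule INF_lower)
      then show "a < ereal (Q t)" using \<open>a < I\<close> by simp
    qed
  next
    fix a assume "I < a"
    then obtain t0 where t0: "t0 \<in> {0<..1}" "ereal (Q t0) < a"
      unfolding I_def by (auto simp: INF_less_iff)
    have "eventually (\<lambda>t. t \<in> {0<..<t0}) (at_right (0::real))"
      unfolding eventually_at_right_field using t0 by (auto intro!: exI[of _ t0])
    then show "eventually (\<lambda>t. ereal (Q t) < a) (at_right 0)"
    proof (rule eventually_mono)
      fix t :: real assume "t \<in> {0<..<t0}"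
      then have "Q t \<le> Q t0" using mono[of t t0] t0 by auto
      then show "ereal (Q t) < a" using t0 by (meson ereal_less_eq(3) order_le_less_trans)
    qed
  qed
  have limf: "((\<lambda>t. (f (x + t *\<^sub>R v) - f x) / t) \<longlongrightarrow> D \<bullet> v) (at_right 0)"
  proof -
    have f0: "(f has_derivative (\<lambda>h. D \<bullet> h)) (at (x + 0 *\<^sub>R v))" using f by simp
    have "((\<lambda>t. x + t *\<^sub>R v) has_derivative (\<lambda>t. t *\<^sub>R v)) (at 0)"
      by (auto intro!: derivative_eq_intros)
    from has_derivative_compose[OF this f0]
    have "((\<lambda>t. f (x + t *\<^sub>R v)) has_derivative (\<lambda>t. D \<bullet> (t *\<^sub>R v))) (at 0)" by simp
    moreover have "(\<lambda>t. D \<bullet> (t *\<^sub>R v)) = (*) (D \<bullet> v)" by (auto simp: fun_eq_iff)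
    ultimately have "((\<lambda>t. f (x + t *\<^sub>R v)) has_field_derivative (D \<bullet> v)) (at 0)"
      unfolding has_field_derivative_def by simp
    then have "((\<lambda>h. (f (x + (0 + h) *\<^sub>R v) - f (x + 0 *\<^sub>R v)) / h) \<longlongrightarrow> D \<bullet> v) (at 0)"
      unfolding DERIV_def by simp
    then have "((\<lambda>h. (f (x + h *\<^sub>R v) - f x) / h) \<longlongrightarrow> D \<bullet> v) (at 0)" by simp
    then show ?thesis using filterlim_at_split by blast
  qed
  have lim1: "((\<lambda>t. ereal ((f (x + t *\<^sub>R v) - f x) / t) + ereal (Q t)) \<longlongrightarrow> ereal (D \<bullet> v) + I) (at_right 0)"
    by (rule tendsto_add_ereal_general2) (use limf limQ in \<open>auto intro: tendsto_ereal\<close>)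
  have eq1: "ereal ((f (x + t *\<^sub>R v) + g (x + t *\<^sub>R v) - (f x + g x)) / t)
     = ereal ((f (x + t *\<^sub>R v) - f x) / t) + ereal (Q t)" for t
    unfolding Q_def by (simp add: diff_divide_distrib add_divide_distrib)
  have "((\<lambda>t. ereal ((f (x + t *\<^sub>R v) + g (x + t *\<^sub>R v) - (f x + g x)) / t)) \<longlongrightarrow> ereal (D \<bullet> v) + I) (at_right 0)"
    unfolding eq1 by (rule lim1)
  then have dd: "dir_deriv (\<lambda>y. f y + g y) x v = ereal (D \<bullet> v) + I"
    unfolding dir_deriv_def by (rule tendsto_Lim[rotated]) simp
  have lim2: "((\<lambda>t. ereal (D \<bullet> v) + ereal (Q t)) \<longlongrightarrow> ereal (D \<bullet> v) + I) (at_right 0)"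
    by (rule tendsto_add_ereal_general2) (use limQ in auto)
  show "((\<lambda>t. ereal (D \<bullet> (z - x) + (g (x + t *\<^sub>R (z - x)) - g x) / t))
            \<longlongrightarrow> dir_deriv (\<lambda>y. f y + g y) x (z - x)) (at_right 0)"
    using lim2 unfolding dd[unfolded v_def] Q_def v_def by simp
  have "I \<le> ereal (Q 1)" unfolding I_def by (rule INF_lower) simp
  moreover have "Q 1 = g z - g x" unfolding Q_def v_def by simp
  ultimately have "ereal (D \<bullet> v) + I \<le> ereal (D \<bullet> v) + ereal (g z - g x)"
    by (metis add_left_mono)
  then show "dir_deriv (\<lambda>y. f y + g y) x (z - x) \<le> ereal (D \<bullet> (z - x) + g z - g x)"
    using dd unfolding v_def by (simp add: add_diff_eq)
qed

theorem theorem3p10: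
  fixes S :: "(real^'n) set" and m :: nat and l :: real
    and f g :: "nat \<Rightarrow> real^'n \<Rightarrow> real" and Df :: "nat \<Rightarrow> real^'n \<Rightarrow> real^'n"
  assumes "S \<noteq> {}" and "closed S" and "convex S" and "m \<ge> 1" and "l > 0"
    and "\<forall>i\<in>{1..m}. \<forall>x\<in>S. (f i has_derivative (\<lambda>h. Df i x \<bullet> h)) (at x)"
    and "\<forall>i\<in>{1..m}. continuous_on S (Df i)"
    and "\<forall>i\<in>{1..m}. convex_on S (g i)"
  shows "(\<forall>x\<in>S. w_merit S m Df g l x \<ge> 0) \<and>
         (\<forall>x\<in>S. pareto_stationary S m (\<lambda>i y. f i y + g i y) x \<longleftrightarrow> w_merit S m Df g l x = 0)"
proof -
  note ne = assms(1) and m1 = assms(4) and l0 = assms(5)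
    and fd = assms(6) and gc = assms(8)
  define T where "T x y i = Df i x \<bullet> (x - y) + g i x - g i y - l / 2 * (norm (x - y))\<^sup>2" for x y i
  define phi where "phi x y = Min (T x y ` {1..m})" for x y
  have wdef: "w_merit S m Df g l x = (SUP y\<in>S. phi x y)" for x
    unfolding w_merit_def phi_def T_def ..
  have fin: "finite {1..m}" and one: "1 \<in> {1..m}" and nem: "{1..m} \<noteq> {}" using m1 by auto
  have bdd: "bdd_above (phi x ` S)" if x: "x \<in> S" for x
  proof -
    obtain c A B where B0: "B \<ge> 0" and lb: "\<forall>y\<in>S. g 1 y \<ge> A - B * norm (y - c)"
      using convex_lower_bound[OF gc[rule_format, OF one] ne] by blast
    define D where "D = norm (Df 1 x) + B"
    define K where "K = g 1 x - A + B * norm (x - c)"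
    have "phi x y \<le> K + D^2 / (2 * l)" if y: "y \<in> S" for y
    proof -
      define s where "s = norm (x - y)"
      have "phi x y \<le> T x y 1" unfolding phi_def using fin one by simp
      also have "\<dots> \<le> K + D * s - l / 2 * s^2"
      proof -
        have "Df 1 x \<bullet> (x - y) \<le> norm (Df 1 x) * s" unfolding s_def by (rule norm_cauchy_schwarz)
        moreover have "- g 1 y \<le> - A + B * norm (y - c)" using lb y by force
        moreover have "norm (y - c) \<le> s + norm (x - c)" unfolding s_def
          using norm_triangle_ineq[of "y - x" "x - c"] by (simp add: norm_minus_commute)
        then have "B * norm (y - c) \<le> B * (s + norm (x - c))" using B0 by (rule mult_left_mono)
        ultimately show ?thesis unfolding T_def K_def D_def s_def
          by (simp add: algebra_simps)
      qed
      also have "\<dots> \<le> K + D^2 / (2 * l)"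
      proof -
        have "D^2 / (2 * l) - (D * s - l / 2 * s^2) = (l * s - D)^2 / (2 * l)"
          using l0 by (simp add: field_simps power2_eq_square)
        moreover have "(l * s - D)^2 / (2 * l) \<ge> 0" using l0 by simp
        ultimately show ?thesis by linarith
      qed
      finally show ?thesis .
    qed
    then show ?thesis by (rule bdd_aboveI2)
  qed
  have phixx: "phi x x = 0" for x
  proof -
    have "T x x ` {1..m} = {0}" using nem unfolding T_def by auto
    then show ?thesis unfolding phi_def by simp
  qed
  have part1: "w_merit S m Df g l x \<ge> 0" if x: "x \<in> S" for x
    unfolding wdef using cSUP_upper[OF x bdd[OF x]] phixx[of x] by simp
  have dirdef: "\<forall>i\<in>{1..m}. dir_deriv (\<lambda>y. f i y + g i y) x (z - x) \<le> ereal (Df i x \<bullet> (z - x) + g i z - g i x)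
    \<and> ((\<lambda>t. ereal (Df i x \<bullet> (z - x) + (g i (x + t *\<^sub>R (z - x)) - g i x) / t))
            \<longlongrightarrow> dir_deriv (\<lambda>y. f i y + g i y) x (z - x)) (at_right 0)"
    if x: "x \<in> S" and z: "z \<in> S" for x z
    using dir_deriv_lemma[OF gc[rule_format] x z fd[rule_format, OF _ x]] by blast
  have fwd: "w_merit S m Df g l x = 0" if x: "x \<in> S" and ps: "pareto_stationary S m (\<lambda>i y. f i y + g i y) x" for x
  proof -
    have "w_merit S m Df g l x \<le> 0" unfolding wdef
    proof (rule cSUP_least[OF ne])
      fix y assume y: "y \<in> S"
      show "phi x y \<le> 0"
      proof (rule ccontr)
        assume "\<not> phi x y \<le> 0"
        then have "\<forall>i\<in>{1..m}. T x y i > 0" unfolding phi_def using fin nem by (simp add: not_le)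
        then have neg: "\<forall>i\<in>{1..m}. dir_deriv (\<lambda>y. f i y + g i y) x (y - x) < 0"
        proof (intro ballI)
          fix i assume "\<forall>i\<in>{1..m}. T x y i > 0" and i: "i \<in> {1..m}"
          then have "T x y i > 0" by blast
          then have lt: "Df i x \<bullet> (y - x) + g i y - g i x < 0" unfolding T_def
            using l0 by (simp add: inner_diff_right) (smt (verit) zero_le_power2 mult_nonneg_nonneg)
          show "dir_deriv (\<lambda>y. f i y + g i y) x (y - x) < 0"
          proof -
            have "dir_deriv (\<lambda>y. f i y + g i y) x (y - x) \<le> ereal (Df i x \<bullet> (y - x) + g i y - g i x)"
              using dirdef[OF x y] i by blast
            also have "\<dots> < 0" using lt by simp
            finally show ?thesis .
          qed
        qed
        have "Max ((\<lambda>i. dir_deriv (\<lambda>y. f i y + g i y) x (y - x)) ` {1..m}) \<ge> 0"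
          using ps y unfolding pareto_stationary_def by blast
        then show False using neg fin nem by (simp add: Max_ge_iff) (meson not_less)
      qed
    qed
    then show ?thesis using part1[OF x] by simp
  qed
  have bwd: "pareto_stationary S m (\<lambda>i y. f i y + g i y) x" if x: "x \<in> S" and w0: "w_merit S m Df g l x = 0" for x
    unfolding pareto_stationary_def
  proof (intro conjI ballI x)
    fix z assume z: "z \<in> S"
    define v where "v = z - x"
    define L where "L i = dir_deriv (\<lambda>y. f i y + g i y) x v" for i
    define Q where "Q i t = (g i (x + t *\<^sub>R v) - g i x) / t" for i t
    show "Max ((\<lambda>i. dir_deriv (\<lambda>y. f i y + g i y) x (z - x)) ` {1..m}) \<ge> 0"
    proof (rule ccontr)
      assume "\<not> ?thesis"
      then have neg: "\<forall>i\<in>{1..m}. L i < 0" unfolding L_def v_def using fin nem by (simp add: not_le Max_less_iff)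
      have ev: "\<forall>i\<in>{1..m}. eventually (\<lambda>t. Df i x \<bullet> v + Q i t + l / 2 * t * (norm v)^2 < 0) (at_right 0)"
      proof
        fix i assume i: "i \<in> {1..m}"
        have lim: "((\<lambda>t. ereal (Df i x \<bullet> v + Q i t)) \<longlongrightarrow> L i) (at_right 0)"
          using dirdef[OF x z] i unfolding L_def Q_def v_def by blast
        obtain a where a: "L i < ereal a" "ereal a < 0" using ereal_dense2 neg i by blast
        have e1: "eventually (\<lambda>t. ereal (Df i x \<bullet> v + Q i t) < ereal a) (at_right 0)"
          using order_tendstoD(2)[OF lim a(1)] .
        have "((\<lambda>t. l / 2 * t * (norm v)^2) \<longlongrightarrow> l / 2 * 0 * (norm v)^2) (at_right (0::real))"
          by (intro tendsto_intros)
        then have e2: "eventually (\<lambda>t. l / 2 * t * (norm v)^2 < - a) (at_right (0::real))"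
          using a(2) by (intro order_tendstoD(2)) auto
        show "eventually (\<lambda>t. Df i x \<bullet> v + Q i t + l / 2 * t * (norm v)^2 < 0) (at_right 0)"
          using e1 e2 by eventually_elim simp
      qed
      have ev2: "eventually (\<lambda>t. t \<in> {0<..1}) (at_right (0::real))"
        unfolding eventually_at_right_field by (auto intro!: exI[of _ 1])
      have "eventually (\<lambda>t. t \<in> {0<..1} \<and> (\<forall>i\<in>{1..m}. Df i x \<bullet> v + Q i t + l / 2 * t * (norm v)^2 < 0)) (at_right (0::real))"
        using ev2 eventually_ball_finite[OF fin ev] by eventually_elim simp
      then obtain t :: real where t: "t \<in> {0<..1}" and tneg: "\<forall>i\<in>{1..m}. Df i x \<bullet> v + Q i t + l / 2 * t * (norm v)^2 < 0"
        using eventually_happens trivial_limit_at_right_real by blast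
      define y where "y = x + t *\<^sub>R v"
      have yS: "y \<in> S"
      proof -
        have "y = (1 - t) *\<^sub>R x + t *\<^sub>R z" unfolding y_def v_def by (simp add: algebra_simps)
        then show ?thesis using convexD[OF assms(3) x z, of "1 - t" t] t by simp
      qed
      have "T x y i = - t * (Df i x \<bullet> v + Q i t + l / 2 * t * (norm v)^2)" for i
      proof -
        have xy: "x - y = - (t *\<^sub>R v)" unfolding y_def by simp
        have a1: "Df i x \<bullet> (x - y) = - t * (Df i x \<bullet> v)" unfolding xy by simp
        have a2: "(norm (x - y))^2 = t^2 * (norm v)^2" unfolding xy using t
          by (simp add: power_mult_distrib)
        have a3: "g i x - g i y = - t * Q i t" unfolding Q_def y_def using t by simp
        have "T x y i = Df i x \<bullet> (x - y) + (g i x - g i y) - l / 2 * (norm (x - y))\<^sup>2"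
          unfolding T_def by simp
        also have "\<dots> = - t * (Df i x \<bullet> v) + - t * Q i t - l / 2 * (t^2 * (norm v)^2)"
          unfolding a1 a2 a3 ..
        also have "\<dots> = - t * (Df i x \<bullet> v + Q i t + l / 2 * t * (norm v)^2)"
          by (simp add: algebra_simps power2_eq_square)
        finally show ?thesis .
      qed
      then have "\<forall>i\<in>{1..m}. T x y i > 0" using tneg t by (simp add: mult_pos_neg)
      then have "phi x y > 0" unfolding phi_def using fin nem by simp
      moreover have "phi x y \<le> w_merit S m Df g l x" unfolding wdef using cSUP_upper[OF yS bdd[OF x]] .
      ultimately show False using w0 by simp
    qed
  qed
  show ?thesis using part1 fwd bwd by blast
qed

end
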